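(* Let $t\ge 2$ and $w\ge 1$ be integers, $u=\lfloor(\frac{t}{2}+1)^2\rfloor$, and let $(\mathcal{X},\mathcal{B})$ be a $(w,v)$ set system. If $\mathcal{F}=\{\mathcal{F}_1,\dots,\mathcal{F}_m\}$ is a minimal forbidden configuration in $\mathcal{B}$ containing $s$ distinct blocks, where $2\le s\le u$ (i.e. $|U(\mathcal{F})|=s$), then $$\Big|\bigcup_{B\in U(\mathcal{F})}B\Big|=\Big|\bigcup_{1\le i\le m}\bigcup_{B\in\mathcal{F}_i}B\Big|\le\min\{(s-1)w,\ v\}.$$
   Context: A $(w,v)$ set system is a pair $(\mathcal{X},\mathcal{B})$ with $|\mathcal{X}|=v$ and $\mathcal{B}$ a family of $w$-element subsets (blocks) of $\mathcal{X}$. A configuration in $\mathcal{B}$ is a collection $\mathcal{F}=\{\mathcal{F}_1,\dots,\mathcal{F}_m\}$ with $\mathcal{F}_i\subseteq\mathcal{B}$, $|\mathcal{F}_i|\le t$, and $\bigcap_i\mathcal{F}_i=\emptyset$; it is minimal if $\bigcap_{j\ne i}\mathcal{F}_j\neq\emptyset$ for every $i$. $U(\mathcal{F})=\bigcup_i\mathcal{F}_i$. A (minimal) forbidden configuration in $\mathcal{B}$ is a (minimal) configuration with $\big|\bigcap_{i=1}^m\big(\bigcup_{B\in\mathcal{F}_i}B\big)\big|\ge w$. *)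

theory Defs
  imports Complex_Main
begin

definition set_system :: "nat \<Rightarrow> nat \<Rightarrow> 'a set \<Rightarrow> 'a set set \<Rightarrow> bool" where
  "set_system w v X B \<longleftrightarrow> finite X \<and> card X = v \<and> (\<forall>b\<in>B. b \<subseteq> X \<and> card b = w)"

definition configuration :: "nat \<Rightarrow> 'a set set \<Rightarrow> 'a set set set \<Rightarrow> bool" where
  "configuration t B \<F> \<longleftrightarrow> finite \<F> \<and> \<F> \<noteq> {} \<and>
     (\<forall>F\<in>\<F>. F \<subseteq> B \<and> card F \<le> t) \<and> \<Inter>\<F> = {}"

definition minimal_configuration :: "nat \<Rightarrow> 'a set set \<Rightarrow> 'a set set set \<Rightarrow> bool" where
  "minimal_configuration t B \<F> \<longleftrightarrow> configuration t B \<F> \<and>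
     (\<forall>F\<in>\<F>. \<Inter>(\<F> - {F}) \<noteq> {})"

definition U :: "'a set set set \<Rightarrow> 'a set set" where
  "U \<F> = \<Union>\<F>"

definition minimal_forbidden_configuration :: "nat \<Rightarrow> nat \<Rightarrow> 'a set set \<Rightarrow> 'a set set set \<Rightarrow> bool" where
  "minimal_forbidden_configuration t w B \<F> \<longleftrightarrow> minimal_configuration t B \<F> \<and>
     card (\<Inter>F\<in>\<F>. \<Union>F) \<ge> w"

end

theory Submission
  imports Defs
begin

theorem lemma2:
  fixes t w v s :: nat and X :: "'a set" and B :: "'a set set" and \<F> :: "'a set set set"
  assumes "t \<ge> 2" and "w \<ge> 1"
    and "set_system w v X B"
    and "minimal_forbidden_configuration t w B \<F>"
    and "card (U \<F>) = s"
    and "2 \<le> s" and "s \<le> nat \<lfloor>(real t / 2 + 1) ^ 2\<rfloor>"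
  shows "card (\<Union>(U \<F>)) = card (\<Union>F\<in>\<F>. \<Union>F)
    \<and> card (\<Union>(U \<F>)) \<le> min ((s - 1) * w) v"
proof -
  have ss: "finite X" "card X = v" "\<And>b. b \<in> B \<Longrightarrow> b \<subseteq> X \<and> card b = w"
    using assms(3) unfolding set_system_def by auto
  have cf: "finite \<F>" "\<F> \<noteq> {}" "\<And>F. F \<in> \<F> \<Longrightarrow> F \<subseteq> B" "\<Inter>\<F> = {}"
    and Iw: "card (\<Inter>F\<in>\<F>. \<Union>F) \<ge> w"
    using assms(4) unfolding minimal_forbidden_configuration_def minimal_configuration_def
      configuration_def by auto
  define UU where "UU = U \<F>"
  define V where "V = \<Union>UU"
  define I where "I = (\<Inter>F\<in>\<F>. \<Union>F)"
  have eq: "V = (\<Union>F\<in>\<F>. \<Union>F)" unfolding V_def UU_def U_def by auto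
  have UUB: "UU \<subseteq> B" using cf(3) unfolding UU_def U_def by auto
  have VX: "V \<subseteq> X" using UUB ss(3) unfolding V_def by auto
  have finV: "finite V" using VX ss(1) finite_subset by blast
  have finUU: "finite UU"
  proof -
    have "UU \<subseteq> Pow X" using UUB ss(3) by auto
    thus ?thesis using ss(1) finite_subset by blast
  qed
  have cardc: "\<And>c. c \<in> UU \<Longrightarrow> card c = w" using UUB ss(3) by auto
  have IV: "I \<subseteq> V" using cf(2) unfolding I_def eq by blast
  have deg1: "\<And>x. x \<in> V \<Longrightarrow> 1 \<le> card {c\<in>UU. x \<in> c}"
  proof -
    fix x assume "x \<in> V"
    then obtain c where "c \<in> UU" "x \<in> c" unfolding V_def by auto
    hence "{c\<in>UU. x \<in> c} \<noteq> {}" by auto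
    moreover have "finite {c\<in>UU. x \<in> c}" using finUU by auto
    ultimately show "1 \<le> card {c\<in>UU. x \<in> c}"
      by (simp add: Suc_leI card_gt_0_iff)
  qed
  have deg2: "\<And>x. x \<in> I \<Longrightarrow> 2 \<le> card {c\<in>UU. x \<in> c}"
  proof -
    fix x assume xI: "x \<in> I"
    obtain F0 where F0: "F0 \<in> \<F>" using cf(2) by auto
    then obtain c0 where c0: "c0 \<in> F0" "x \<in> c0" using xI unfolding I_def by auto
    have "c0 \<notin> \<Inter>\<F>" using cf(4) by auto
    then obtain F1 where F1: "F1 \<in> \<F>" "c0 \<notin> F1" by auto
    then obtain c1 where c1: "c1 \<in> F1" "x \<in> c1" using xI unfolding I_def by auto
    have ne: "c0 \<noteq> c1" using c1 F1 by auto
    have "{c0, c1} \<subseteq> {c\<in>UU. x \<in> c}"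
      using c0 c1 F0 F1 unfolding UU_def U_def by auto
    moreover have "finite {c\<in>UU. x \<in> c}" using finUU by auto
    ultimately have "card {c0, c1} \<le> card {c\<in>UU. x \<in> c}" by (rule card_mono[rotated])
    thus "2 \<le> card {c\<in>UU. x \<in> c}" using ne by simp
  qed
  have dc: "(\<Sum>c\<in>UU. card c) = (\<Sum>x\<in>V. card {c\<in>UU. x \<in> c})"
  proof -
    have "(\<Sum>c\<in>UU. card c) = (\<Sum>c\<in>UU. \<Sum>x\<in>V. (if x \<in> c then 1 else 0::nat))"
    proof (rule sum.cong[OF refl])
      fix c assume "c \<in> UU"
      hence "c \<subseteq> V" unfolding V_def by auto
      hence "c = V \<inter> c" by auto
      hence "card c = card (V \<inter> c)" by simp
      also have "\<dots> = (\<Sum>x\<in>V. (if x \<in> c then 1 else 0::nat))"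
        using finV by (simp add: sum.If_cases)
      finally show "card c = (\<Sum>x\<in>V. (if x \<in> c then 1 else 0::nat))" .
    qed
    also have "\<dots> = (\<Sum>x\<in>V. \<Sum>c\<in>UU. (if x \<in> c then 1 else 0::nat))"
      by (rule sum.swap)
    also have "\<dots> = (\<Sum>x\<in>V. card {c\<in>UU. x \<in> c})"
      using finUU by (simp add: sum.If_cases Int_def conj_commute)
    finally show ?thesis .
  qed
  have "(\<Sum>c\<in>UU. card c) = s * w" using cardc assms(5) unfolding UU_def by simp
  moreover have "(\<Sum>x\<in>V. card {c\<in>UU. x \<in> c}) \<ge> (\<Sum>x\<in>V. 1 + (if x \<in> I then 1 else 0))"
    by (rule sum_mono) (use deg1 deg2 in fastforce)
  moreover have "(\<Sum>x\<in>V. 1 + (if x \<in> I then 1 else 0::nat)) = card V + card I"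
  proof -
    have "(\<Sum>x\<in>V. 1 + (if x \<in> I then 1 else 0::nat)) = (\<Sum>x\<in>V. 1) + (\<Sum>x\<in>V. (if x \<in> I then 1 else 0::nat))"
      by (rule sum.distrib)
    also have "\<dots> = card V + card (V \<inter> I)" using finV by (simp add: sum.If_cases)
    also have "V \<inter> I = I" using IV by auto
    finally show ?thesis .
  qed
  ultimately have "card V + card I \<le> s * w" using dc by linarith
  moreover have "card I \<ge> w" using Iw unfolding I_def .
  ultimately have "card V \<le> (s - 1) * w" by (simp add: diff_mult_distrib)
  moreover have "card V \<le> v" using card_mono[OF ss(1) VX] ss(2) by simp
  ultimately show ?thesis unfolding UU_def[symmetric] V_def[symmetric] eq[symmetric] by simp
qed

end
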